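(* Let $N$ and $\tilde{N}$ be real symmetric $n\times n$ matrices such that $N$ is positive semidefinite, $I-N$ and $I-\tilde N$ are positive semidefinite, and $I-\tilde{N}\approx_{\epsilon}I-N$ for some $\epsilon\in[0,1]$. Then $I-\tilde{N}^2\approx_{\epsilon}I-N^2$.
   Context: For real symmetric $X,Y$ and $\epsilon\ge0$, $X\approx_\epsilon Y$ means $(1-\epsilon)v^TYv\le v^TXv\le(1+\epsilon)v^TYv$ for all $v\in\mathbb{R}^n$. *)

theory Defs
  imports "HOL-Analysis.Analysis"
begin

text \<open>Real n x n matrices are rendered as real^'n^'n (n = CARD('n)).\<close>

definition sym_mat :: "real^'n^'n \<Rightarrow> bool" where
  "sym_mat A \<longleftrightarrow> transpose A = A"

definition psd :: "real^'n^'n \<Rightarrow> bool" where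
  "psd A \<longleftrightarrow> (\<forall>v. 0 \<le> v \<bullet> (A *v v))"

definition spec_approx :: "real^'n^'n \<Rightarrow> real \<Rightarrow> real^'n^'n \<Rightarrow> bool" where
  "spec_approx X eps Y \<longleftrightarrow>
     (\<forall>v. (1 - eps) * (v \<bullet> (Y *v v)) \<le> v \<bullet> (X *v v) \<and>
          v \<bullet> (X *v v) \<le> (1 + eps) * (v \<bullet> (Y *v v)))"

end

theory Submission
  imports Defs
begin

lemma sym_dot:
  fixes M :: "real^'n^'n"
  assumes "sym_mat M"
  shows "x \<bullet> (M *v y) = (M *v x) \<bullet> y"
proof -
  have "x \<bullet> (M *v y) = (x v* M) \<bullet> y" by (simp add: dot_lmul_matrix)
  also have "x v* M = transpose M *v x" by simp
  also have "\<dots> = M *v x" using assms by (simp add: sym_mat_def)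
  finally show ?thesis .
qed

lemma polar:
  fixes g :: "real^'n \<Rightarrow> real^'n" and p :: "real^'n \<Rightarrow> real"
  assumes lin: "linear g" and sym: "\<And>x y. x \<bullet> g y = g x \<bullet> y"
    and b1: "\<And>v. v \<bullet> g v \<le> e * p v" and b2: "\<And>v. - (e * p v) \<le> v \<bullet> g v"
    and par: "\<And>x y. p (x+y) + p (x-y) = 2*p x + 2*p y"
  shows "2*(x \<bullet> g y) \<le> e*(p x + p y)" and "- (e*(p x + p y)) \<le> 2*(x \<bullet> g y)"
proof -
  have e: "(x+y) \<bullet> g (x+y) - (x-y) \<bullet> g (x-y) = 4 * (x \<bullet> g y)"
    using sym[of y x] by (simp add: linear_add[OF lin] linear_diff[OF lin] inner_add_left inner_add_right
        inner_diff_left inner_diff_right inner_commute)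
  have "(x+y) \<bullet> g (x+y) - (x-y) \<bullet> g (x-y) \<le> e * (p (x+y) + p (x-y))"
    using b1[of "x+y"] b2[of "x-y"] by (simp add: algebra_simps)
  hence "4 * (x \<bullet> g y) \<le> e * (2*p x + 2*p y)" by (simp only: e par)
  then show "2*(x \<bullet> g y) \<le> e*(p x + p y)" by (simp add: algebra_simps)
  have "(x+y) \<bullet> g (x+y) - (x-y) \<bullet> g (x-y) \<ge> - (e * (p (x+y) + p (x-y)))"
    using b2[of "x+y"] b1[of "x-y"] by (simp add: algebra_simps)
  hence "- (e * (2*p x + 2*p y)) \<le> 4 * (x \<bullet> g y)" by (simp only: e par)
  then show "- (e*(p x + p y)) \<le> 2*(x \<bullet> g y)" by (simp add: algebra_simps)
qed

theorem mainTheorem7: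
  fixes N Nt :: "real^'n^'n" and eps :: real
  assumes "sym_mat N" and "sym_mat Nt"
    and "psd N"
    and "psd (mat 1 - N)" and "psd (mat 1 - Nt)"
    and "0 \<le> eps" and "eps \<le> 1"
    and "spec_approx (mat 1 - Nt) eps (mat 1 - N)"
  shows "spec_approx (mat 1 - Nt ** Nt) eps (mat 1 - N ** N)"
proof -
  note sN = sym_dot[OF assms(1)] and sT = sym_dot[OF assms(2)]
  have NP: "0 \<le> v \<bullet> (N *v v)" for v using assms(3) by (simp add: psd_def)
  have sp: "(1 - eps) * (v \<bullet> v - v \<bullet> (N *v v)) \<le> v \<bullet> v - v \<bullet> (Nt *v v) \<and>
      v \<bullet> v - v \<bullet> (Nt *v v) \<le> (1 + eps) * (v \<bullet> v - v \<bullet> (N *v v))" for v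
    using assms(8) by (simp add: spec_approx_def matrix_vector_mult_diff_rdistrib inner_diff_right)
  have qT: "v \<bullet> ((mat 1 - Nt ** Nt) *v v) = v \<bullet> v - (Nt *v v) \<bullet> (Nt *v v)" for v
    using sT[of v "Nt *v v"] by (simp add: matrix_vector_mult_diff_rdistrib inner_diff_right
        matrix_vector_mul_assoc[symmetric])
  have qN: "v \<bullet> ((mat 1 - N ** N) *v v) = v \<bullet> v - (N *v v) \<bullet> (N *v v)" for v
    using sN[of v "N *v v"] by (simp add: matrix_vector_mult_diff_rdistrib inner_diff_right
        matrix_vector_mul_assoc[symmetric])
  show ?thesis unfolding spec_approx_def qT qN
  proof (intro allI conjI)
    fix v :: "real^'n"
    define g where "g = (\<lambda>x. N *v x - Nt *v x)"
    define p where "p = (\<lambda>x::real^'n. x \<bullet> x - x \<bullet> (N *v x))"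
    have glin: "linear g" unfolding g_def
      by (rule linearI) (simp_all add: algebra_simps matrix_vector_right_distrib matrix_vector_mult_scaleR)
    have gsym: "x \<bullet> g y = g x \<bullet> y" for x y
      unfolding g_def using sN[of x y] sT[of x y] by (simp add: inner_diff_left inner_diff_right)
    have gb1: "w \<bullet> g w \<le> eps * p w" for w
      using sp[of w] unfolding g_def p_def by (simp add: inner_diff_right algebra_simps)
    have gb2: "- (eps * p w) \<le> w \<bullet> g w" for w
      using sp[of w] unfolding g_def p_def by (simp add: inner_diff_right algebra_simps)
    have ppar: "p (x+y) + p (x-y) = 2*p x + 2*p y" for x y
      unfolding p_def using sN[of x y] sN[of y x]
      by (simp add: matrix_vector_right_distrib matrix_vector_mult_diff_distrib inner_add_left
          inner_add_right inner_diff_left inner_diff_right algebra_simps inner_commute)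
    note P = polar[OF glin gsym gb1 gb2 ppar]
    let ?n = "N *v v" and ?d = "g v"
    have ntv: "Nt *v v = ?n - ?d" unfolding g_def by simp
    have c1: "2 * (?n \<bullet> ?d) \<le> eps * (p ?n + p v)" by (rule P(1))
    have key: "2 * (?n \<bullet> ?n) \<le> ?n \<bullet> (N *v ?n) + v \<bullet> ?n"
    proof -
      have "0 \<le> (v - ?n) \<bullet> (N *v (v - ?n))" by (rule NP)
      also have "\<dots> = v \<bullet> ?n - 2 * (?n \<bullet> ?n) + ?n \<bullet> (N *v ?n)"
        using sN[of v ?n] sN[of ?n v]
        by (simp add: matrix_vector_mult_diff_distrib inner_diff_left inner_diff_right inner_commute)
      finally show ?thesis by simp
    qed
    have "p ?n + p v \<le> v \<bullet> v - ?n \<bullet> ?n" unfolding p_def using key by simp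
    hence c2: "2 * (?n \<bullet> ?d) \<le> eps * (v \<bullet> v - ?n \<bullet> ?n)"
      using c1 assms(6) by (meson mult_left_mono order_trans)
    have dd: "(Nt *v v) \<bullet> (Nt *v v) = ?n \<bullet> ?n - 2 * (?n \<bullet> ?d) + ?d \<bullet> ?d"
      unfolding ntv by (simp add: inner_diff_left inner_diff_right inner_commute)
    have "0 \<le> ?d \<bullet> ?d" by simp
    show "v \<bullet> v - (Nt *v v) \<bullet> (Nt *v v) \<le> (1 + eps) * (v \<bullet> v - ?n \<bullet> ?n)"
    proof -
      have "(1 + eps) * (v \<bullet> v - ?n \<bullet> ?n) = (v \<bullet> v - ?n \<bullet> ?n) + eps * (v \<bullet> v - ?n \<bullet> ?n)"
        by (simp add: algebra_simps)
      thus ?thesis using c2 \<open>(Nt *v v) \<bullet> (Nt *v v) = ?n \<bullet> ?n - 2 * (?n \<bullet> ?d) + ?d \<bullet> ?d\<close>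
        \<open>0 \<le> ?d \<bullet> ?d\<close> by linarith
    qed
  next
    fix v :: "real^'n"
    define g where "g = (\<lambda>x. Nt *v x - (1 - eps) *\<^sub>R (N *v x))"
    define p where "p = (\<lambda>x::real^'n. x \<bullet> x)"
    have glin: "linear g" unfolding g_def
      by (rule linearI) (simp_all add: algebra_simps matrix_vector_right_distrib matrix_vector_mult_scaleR)
    have gsym: "x \<bullet> g y = g x \<bullet> y" for x y
      unfolding g_def using sN[of x y] sT[of x y] by (simp add: inner_diff_left inner_diff_right)
    have gb1: "w \<bullet> g w \<le> eps * p w" for w
      using sp[of w] NP[of w] assms(6) unfolding g_def p_def
      by (simp add: inner_diff_right algebra_simps)
    have gb2: "- (eps * p w) \<le> w \<bullet> g w" for w
    proof -
      have "0 \<le> eps * (w \<bullet> (N *v w))" using NP[of w] assms(6) by simp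
      thus ?thesis using sp[of w] unfolding g_def p_def by (simp add: inner_diff_right algebra_simps)
    qed
    have ppar: "p (x+y) + p (x-y) = 2*p x + 2*p y" for x y
      unfolding p_def by (simp add: inner_add_left inner_add_right inner_diff_left
          inner_diff_right algebra_simps inner_commute)
    note P = polar[OF glin gsym gb1 gb2 ppar]
    let ?n = "N *v v" and ?w = "g v"
    define a where "a = ?n \<bullet> ?n"
    define u where "u = v \<bullet> v"
    define w where "w = ?w \<bullet> ?w"
    define c where "c = ?n \<bullet> ?w"
    have ntv: "Nt *v v = (1 - eps) *\<^sub>R ?n + ?w" unfolding g_def by simp
    have exp: "(Nt *v v) \<bullet> (Nt *v v) = (1-eps)^2 * a + 2*(1-eps)*c + w"
      unfolding ntv a_def c_def w_def
      by (simp add: inner_add_left inner_add_right inner_commute power2_eq_square algebra_simps)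
    have a0: "0 \<le> a" "0 \<le> w" "0 \<le> u" unfolding a_def w_def u_def by simp_all
    have amgm: "2 * eps * c \<le> eps^2 * a + w"
    proof -
      have "0 \<le> (eps *\<^sub>R ?n - ?w) \<bullet> (eps *\<^sub>R ?n - ?w)" by simp
      thus ?thesis unfolding a_def c_def w_def
        by (simp add: inner_diff_left inner_diff_right inner_commute power2_eq_square algebra_simps)
    qed
    have ineq: "(1-eps)^2 * a + 2*(1-eps)*c + w \<le> (1 - eps) * a + eps * u"
    proof (cases "eps = 0")
      case True
      have "2 * (?w \<bullet> g v) \<le> 0 * (p ?w + p v)" using P(1)[of ?w v] True by simp
      hence "?w \<bullet> ?w \<le> 0" by simp
      hence "?w = 0" by (meson inner_gt_zero_iff not_le)
      thus ?thesis using True unfolding c_def w_def by simp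
    next
      case False
      hence ep: "0 < eps" using assms(6) by simp
      have "2 * ((inverse eps *\<^sub>R ?w) \<bullet> g v) \<le> eps * (p (inverse eps *\<^sub>R ?w) + p v)"
        by (rule P(1))
      hence "2 * inverse eps * w \<le> eps * (inverse eps ^ 2 * w + u)"
        unfolding p_def w_def u_def by (simp add: power2_eq_square mult.assoc)
      hence "eps * (2 * inverse eps * w) \<le> eps * (eps * (inverse eps ^ 2 * w + u))"
        using ep by (intro mult_left_mono) auto
      also have "eps * (2 * inverse eps * w) = 2 * w" using ep by (simp add: field_simps)
      also have "eps * (eps * (inverse eps ^ 2 * w + u)) = w + eps^2 * u"
        using ep by (simp add: field_simps power2_eq_square)
      finally have wb: "w \<le> eps^2 * u" by simp
      have "2*(1-eps)*c * eps \<le> (1-eps) * (eps^2 * a + w)"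
        using amgm assms(7) mult_left_mono[OF amgm, of "1-eps"] by (simp add: algebra_simps)
      moreover have "((1-eps) * eps * a + (1-eps) * w / eps) * eps = (1-eps) * (eps^2 * a + w)"
        using ep by (simp add: field_simps power2_eq_square)
      ultimately have "(2*(1-eps)*c) * eps \<le> ((1-eps) * eps * a + (1-eps) * w / eps) * eps"
        by simp
      hence cb: "2*(1-eps)*c \<le> (1-eps) * eps * a + (1-eps) * w / eps"
        using ep by (meson mult_le_cancel_right_pos)
      have "(1-eps)^2 * a + 2*(1-eps)*c + w \<le> (1-eps) * a + w / eps"
        using cb ep by (simp add: power2_eq_square field_simps)
      also have "w / eps \<le> eps * u" using wb ep by (simp add: power2_eq_square field_simps)
      finally show ?thesis by simp
    qed
    show "(1 - eps) * (v \<bullet> v - ?n \<bullet> ?n) \<le> v \<bullet> v - (Nt *v v) \<bullet> (Nt *v v)"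
      using ineq exp unfolding a_def u_def by (simp add: algebra_simps)
  qed
qed

end
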